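(* Consider a multi-sender single-uniprior index-coding instance with binary messages, information-flow graph $\mathcal{G}$ and message graph $\mathcal{U}$. Let $\mathcal{T}_1,\dots,\mathcal{T}_k$ be pairwise vertex-disjoint connecting trees. Then \[ \tilde{\ell}^*(\mathcal{G},\mathcal{U}) \leq V_{\mathrm{out}}(\mathcal{G}) - \big(N_{\mathrm{conn}}(\mathcal{G},\mathcal{U}) + k\big), \] where $N_{\mathrm{conn}}(\mathcal{G},\mathcal{U})$ is the number of message-connected leaf SCCs of $\mathcal{G}$. In particular the bound holds with $k$ replaced by the maximum number of pairwise vertex-disjoint connecting trees.
   Context: Multi-sender single-uniprior index coding with binary messages: there are $n$ receivers and $n$ independent messages $x_1,\dots,x_n$, each a single bit uniformly distributed on $\{0,1\}$. Receiver $i$ knows $x_i$ a priori and requests a set of messages not containing $x_i$. The information-flow graph is the directed graph $\mathcal{G}=(\mathcal{V},\mathcal{A})$, $\mathcal{V}=\{1,\dots,n\}$, with an arc $(j\to i)$ iff receiver $i$ requests $x_j$. There are $S$ senders; sender $s$ knows a subset $\mathcal{M}_s$ of the messages, and every message is known to some sender. An index code consists of, for each sender $s$, an encoding function mapping the messages in $\mathcal{M}_s$ to $\ell_s$ bits, and for each receiver $i$ a decoding function that, from all senders' outputs together with $x_i$, returns every message requested by $i$, for all message values; its length is $\sum_s \ell_s$. $\tilde{\ell}^*(\mathcal{G},\mathcal{U})$ is the minimum length of an index code for the instance. The message graph $\mathcal{U}$ is the undirected graph on $\mathcal{V}$ with an edge $\{i,j\}$ iff some sender knows both $x_i$ and $x_j$.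 A leaf vertex of $\mathcal{G}$ has no outgoing arcs; $V_{\mathrm{out}}(\mathcal{G})$ is the number of non-leaf vertices. A leaf SCC of $\mathcal{G}$ is a strongly connected component with at least two vertices and no arc from it to a vertex outside it. A leaf SCC with vertex set $\mathcal{V}_S$ is message-connected iff the subgraph of $\mathcal{U}$ induced by $\mathcal{V}_S$ is connected. A connecting tree is a subgraph $\mathcal{T}=(\mathcal{V}^{\mathrm T},\mathcal{E}^{\mathrm T})$ of $\mathcal{U}$ that is a tree (connected, acyclic), such that every vertex of $\mathcal{V}^{\mathrm T}$ has at least one outgoing arc in $\mathcal{G}$ and all its outgoing arcs go to vertices in $\mathcal{V}^{\mathrm T}$, and no vertex of $\mathcal{V}^{\mathrm T}$ belongs to a message-connected leaf SCC of $\mathcal{G}$. *)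

theory Defs
  imports Main
begin

text \<open>Vertices (receivers / messages) are 0..<n. Receiver i requests the set R i.
  Senders are 0..<S, sender s knows the messages in M s.
  A message assignment is x :: nat \<Rightarrow> bool (only the values on 0..<n matter).\<close>

definition valid_instance :: "nat \<Rightarrow> (nat \<Rightarrow> nat set) \<Rightarrow> nat \<Rightarrow> (nat \<Rightarrow> nat set) \<Rightarrow> bool" where
  "valid_instance n R S M \<longleftrightarrow>
     (\<forall>i<n. R i \<subseteq> {..<n} \<and> i \<notin> R i) \<and>
     (\<forall>s<S. M s \<subseteq> {..<n}) \<and>
     (\<forall>j<n. \<exists>s<S. j \<in> M s)"

definition is_index_code ::
  "nat \<Rightarrow> (nat \<Rightarrow> nat set) \<Rightarrow> nat \<Rightarrow> (nat \<Rightarrow> nat set) \<Rightarrow> (nat \<Rightarrow> nat)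
   \<Rightarrow> (nat \<Rightarrow> (nat \<Rightarrow> bool) \<Rightarrow> bool list)
   \<Rightarrow> (nat \<Rightarrow> (nat \<Rightarrow> bool list) \<Rightarrow> bool \<Rightarrow> nat \<Rightarrow> bool) \<Rightarrow> bool" where
  "is_index_code n R S M l E D \<longleftrightarrow>
     (\<forall>s<S. \<forall>x. length (E s x) = l s) \<and>
     (\<forall>s<S. \<forall>x y. (\<forall>j\<in>M s. x j = y j) \<longrightarrow> E s x = E s y) \<and>
     (\<forall>i<n. \<forall>x. \<forall>j\<in>R i.
        D i (\<lambda>s. if s < S then E s x else []) (x i) j = x j)"

definition min_index_code_length :: "nat \<Rightarrow> (nat \<Rightarrow> nat set) \<Rightarrow> nat \<Rightarrow> (nat \<Rightarrow> nat set) \<Rightarrow> nat" where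
  "min_index_code_length n R S M =
     (LEAST L. \<exists>l E D. is_index_code n R S M l E D \<and> L = (\<Sum>s<S. l s))"

definition arcs :: "nat \<Rightarrow> (nat \<Rightarrow> nat set) \<Rightarrow> (nat \<times> nat) set" where
  "arcs n R = {(j, i). i < n \<and> j \<in> R i}"

definition non_leaf :: "nat \<Rightarrow> (nat \<Rightarrow> nat set) \<Rightarrow> nat \<Rightarrow> bool" where
  "non_leaf n R v \<longleftrightarrow> (\<exists>w. (v, w) \<in> arcs n R)"

definition V_out :: "nat \<Rightarrow> (nat \<Rightarrow> nat set) \<Rightarrow> nat" where
  "V_out n R = card {v. v < n \<and> non_leaf n R v}"

definition scc_of :: "nat \<Rightarrow> (nat \<Rightarrow> nat set) \<Rightarrow> nat \<Rightarrow> nat set" where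
  "scc_of n R v = {u. u < n \<and> (v, u) \<in> (arcs n R)\<^sup>* \<and> (u, v) \<in> (arcs n R)\<^sup>*}"

definition is_scc :: "nat \<Rightarrow> (nat \<Rightarrow> nat set) \<Rightarrow> nat set \<Rightarrow> bool" where
  "is_scc n R C \<longleftrightarrow> (\<exists>v<n. C = scc_of n R v)"

definition is_leaf_scc :: "nat \<Rightarrow> (nat \<Rightarrow> nat set) \<Rightarrow> nat set \<Rightarrow> bool" where
  "is_leaf_scc n R C \<longleftrightarrow> is_scc n R C \<and> card C \<ge> 2 \<and>
     (\<forall>u\<in>C. \<forall>w. (u, w) \<in> arcs n R \<longrightarrow> w \<in> C)"

definition msg_edge :: "nat \<Rightarrow> (nat \<Rightarrow> nat set) \<Rightarrow> nat \<Rightarrow> nat \<Rightarrow> bool" where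
  "msg_edge S M i j \<longleftrightarrow> i \<noteq> j \<and> (\<exists>s<S. i \<in> M s \<and> j \<in> M s)"

definition msg_connected :: "nat \<Rightarrow> (nat \<Rightarrow> nat set) \<Rightarrow> nat set \<Rightarrow> bool" where
  "msg_connected S M C \<longleftrightarrow>
     (\<forall>u\<in>C. \<forall>w\<in>C. (u, w) \<in> {(a, b). a \<in> C \<and> b \<in> C \<and> msg_edge S M a b}\<^sup>*)"

definition N_conn :: "nat \<Rightarrow> (nat \<Rightarrow> nat set) \<Rightarrow> nat \<Rightarrow> (nat \<Rightarrow> nat set) \<Rightarrow> nat" where
  "N_conn n R S M = card {C. is_leaf_scc n R C \<and> msg_connected S M C}"

definition edge_rel :: "nat set set \<Rightarrow> (nat \<times> nat) set" where
  "edge_rel E = {(a, b). {a, b} \<in> E}"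

text \<open>A tree: finite nonempty vertex set, edges are 2-element subsets of the vertex set,
  connected, and acyclic (every edge is a bridge, i.e. its endpoints are not connected
  once the edge is removed).\<close>
definition is_tree :: "nat set \<Rightarrow> nat set set \<Rightarrow> bool" where
  "is_tree V E \<longleftrightarrow> finite V \<and> V \<noteq> {} \<and>
     (\<forall>e\<in>E. \<exists>a b. a \<noteq> b \<and> a \<in> V \<and> b \<in> V \<and> e = {a, b}) \<and>
     (\<forall>u\<in>V. \<forall>w\<in>V. (u, w) \<in> (edge_rel E)\<^sup>*) \<and>
     (\<forall>a b. {a, b} \<in> E \<longrightarrow> (a, b) \<notin> (edge_rel (E - {{a, b}}))\<^sup>*)"

definition is_connecting_tree ::
  "nat \<Rightarrow> (nat \<Rightarrow> nat set) \<Rightarrow> nat \<Rightarrow> (nat \<Rightarrow> nat set) \<Rightarrow> nat set \<Rightarrow> nat set set \<Rightarrow> bool" where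
  "is_connecting_tree n R S M VT ET \<longleftrightarrow>
     VT \<subseteq> {..<n} \<and>
     is_tree VT ET \<and>
     (\<forall>a b. {a, b} \<in> ET \<longrightarrow> msg_edge S M a b) \<and>
     (\<forall>v\<in>VT. non_leaf n R v \<and> (\<forall>w. (v, w) \<in> arcs n R \<longrightarrow> w \<in> VT)) \<and>
     (\<forall>v\<in>VT. \<not> (\<exists>C. is_leaf_scc n R C \<and> msg_connected S M C \<and> v \<in> C))"

end

theory Submission
  imports Defs
begin

lemma sum_len_filter:
  assumes "\<forall>v\<in>set xs. \<sigma> v < (S::nat)"
  shows "(\<Sum>s<S. length (filter (\<lambda>v. \<sigma> v = s) xs)) = length xs"
  using assms
proof (induction xs)
  case Nil
  then show ?case by simp
next
  case (Cons a xs)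
  have "(\<Sum>s<S. length (filter (\<lambda>v. \<sigma> v = s) (a # xs)))
      = (\<Sum>s<S. (if \<sigma> a = s then 1 else 0) + length (filter (\<lambda>v. \<sigma> v = s) xs))"
    by (rule sum.cong) auto
  also have "\<dots> = (\<Sum>s<S. (if \<sigma> a = s then 1 else 0)) + length xs"
    using Cons by (simp add: sum.distrib)
  also have "\<dots> = 1 + length xs" using Cons.prems by simp
  finally show ?case by simp
qed

lemma code_bound:
  fixes bit :: "nat \<Rightarrow> (nat \<Rightarrow> bool) \<Rightarrow> bool" and \<sigma> :: "nat \<Rightarrow> nat"
  assumes dec: "\<forall>i<n. \<forall>j\<in>R i. \<forall>x y. x i = y i \<and> (\<forall>v\<in>B. bit v x = bit v y) \<longrightarrow> x j = y j"
    and snd: "\<forall>v\<in>B. \<sigma> v < S \<and> (\<forall>x y. (\<forall>j\<in>M (\<sigma> v). x j = y j) \<longrightarrow> bit v x = bit v y)"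
    and fin: "finite B"
  shows "min_index_code_length n R S M \<le> card B"
proof -
  define bs where "bs = sorted_list_of_set B"
  define E where "E = (\<lambda>s x. map (\<lambda>v. bit v x) (filter (\<lambda>v. \<sigma> v = s) bs))"
  define l where "l = (\<lambda>s. length (filter (\<lambda>v. \<sigma> v = s) bs))"
  define D where "D = (\<lambda>i (w::nat \<Rightarrow> bool list) c j. \<exists>y. y i = c \<and> (\<forall>s<S. w s = E s y) \<and> y j)"
  have setbs: "set bs = B" using fin by (simp add: bs_def)
  have eqbits: "\<forall>v\<in>B. bit v x = bit v y" if "\<forall>s<S. E s x = E s y" for x y :: "nat \<Rightarrow> bool"
  proof
    fix v assume v: "v \<in> B"
    have "E (\<sigma> v) x = E (\<sigma> v) y" using that snd v by auto
    then have "\<forall>u\<in>set (filter (\<lambda>u. \<sigma> u = \<sigma> v) bs). bit u x = bit u y"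
      unfolding E_def by (simp add: map_eq_conv)
    then show "bit v x = bit v y" using v setbs by auto
  qed
  have code: "is_index_code n R S M l E D"
    unfolding is_index_code_def
  proof (intro conjI allI impI ballI)
    fix s and x :: "nat \<Rightarrow> bool" assume "s < S" show "length (E s x) = l s" by (simp add: E_def l_def)
  next
    fix s and x y :: "nat \<Rightarrow> bool" assume s: "s < S" and ag: "\<forall>j\<in>M s. x j = y j"
    have "\<forall>v\<in>set (filter (\<lambda>v. \<sigma> v = s) bs). bit v x = bit v y"
      using snd ag setbs by auto
    then show "E s x = E s y" unfolding E_def by (simp add: map_eq_conv)
  next
    fix i and x :: "nat \<Rightarrow> bool" and j assume i: "i < n" and j: "j \<in> R i"
    show "D i (\<lambda>s. if s < S then E s x else []) (x i) j = x j"
    proof (cases "x j")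
      case True
      then show ?thesis unfolding D_def by auto
    next
      case False
      have "\<not> y j" if "y i = x i" "\<forall>s<S. E s x = E s y" for y :: "nat \<Rightarrow> bool"
        using dec i j eqbits[OF that(2)] that(1) False by metis
      then show ?thesis using False unfolding D_def by auto
    qed
  qed
  have "(\<Sum>s<S. l s) = length bs"
    unfolding l_def by (rule sum_len_filter) (use snd setbs in auto)
  also have "\<dots> = card B" using fin by (simp add: bs_def)
  finally have "\<exists>l E D. is_index_code n R S M l E D \<and> card B = (\<Sum>s<S. l s)"
    using code by metis
  then show ?thesis unfolding min_index_code_length_def by (rule Least_le)
qed

lemma parent_exists:
  fixes Rel :: "(nat \<times> nat) set"
  assumes "(r, v) \<in> Rel\<^sup>*" "v \<noteq> r"
  shows "\<exists>p. (p, v) \<in> Rel \<and> (LEAST m. (r, p) \<in> Rel ^^ m) < (LEAST m. (r, v) \<in> Rel ^^ m)"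
proof -
  obtain m where m: "(r, v) \<in> Rel ^^ m" using assms(1) rtrancl_power by blast
  define d where "d = (LEAST m. (r, v) \<in> Rel ^^ m)"
  have d: "(r, v) \<in> Rel ^^ d" unfolding d_def using m by (rule LeastI)
  have "d \<noteq> 0" using d assms(2) by (cases d) auto
  then obtain d' where dd: "d = Suc d'" by (cases d) auto
  then have "(r, v) \<in> Rel ^^ d' O Rel" using d by simp
  then obtain p where p1: "(r, p) \<in> Rel ^^ d'" and p2: "(p, v) \<in> Rel" by blast
  have "(LEAST m. (r, p) \<in> Rel ^^ m) \<le> d'" using p1 by (rule Least_le)
  then show ?thesis using p2 dd d_def by (intro exI[of _ p]) auto
qed


lemma groups_bound:
  assumes valid: "valid_instance n R S M"
    and fin: "finite G"
    and ne: "\<forall>C\<in>G. C \<noteq> {}"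
    and sub: "\<forall>C\<in>G. C \<subseteq> {v. v < n \<and> non_leaf n R v}"
    and cl: "\<forall>C\<in>G. \<forall>u\<in>C. \<forall>w. (u, w) \<in> arcs n R \<longrightarrow> w \<in> C"
    and conn: "\<forall>C\<in>G. msg_connected S M C"
    and disj: "\<forall>C\<in>G. \<forall>C'\<in>G. C \<noteq> C' \<longrightarrow> C \<inter> C' = {}"
  shows "min_index_code_length n R S M + card G \<le> V_out n R"
proof -
  define NL where "NL = {v. v < n \<and> non_leaf n R v}"
  have finNL: "finite NL" unfolding NL_def by simp
  define rt where "rt = (\<lambda>C::nat set. SOME r. r \<in> C)"
  have rtC: "rt C \<in> C" if "C \<in> G" for C
    unfolding rt_def using ne that by (metis some_in_eq)
  define Roots where "Roots = rt ` G"
  have injrt: "inj_on rt G"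
    by (rule inj_onI) (metis rtC disj disjoint_iff)
  have cardR: "card Roots = card G" unfolding Roots_def using injrt by (simp add: card_image)
  have RootsNL: "Roots \<subseteq> NL" unfolding Roots_def NL_def using rtC sub by blast
  define B where "B = NL - Roots"
  have finB: "finite B" unfolding B_def using finNL by simp
  have cardB: "card B = card NL - card G"
    unfolding B_def using card_Diff_subset[OF finite_subset[OF RootsNL finNL] RootsNL] cardR by simp
  have cardle: "card G \<le> card NL" using card_mono[OF finNL RootsNL] cardR by simp
  define Rel where "Rel = (\<lambda>C. {(a, b). a \<in> C \<and> b \<in> C \<and> msg_edge S M a b})"
  define dist where "dist = (\<lambda>C v. LEAST m. (rt C, v) \<in> (Rel C) ^^ m)"
  define grp where "grp = (\<lambda>v. SOME C. C \<in> G \<and> v \<in> C)"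
  have grpC: "grp v = C" if "C \<in> G" "v \<in> C" for C v
  proof -
    have "grp v \<in> G \<and> v \<in> grp v" unfolding grp_def by (rule someI[of _ C]) (use that in auto)
    then show ?thesis using disj that by blast
  qed
  define par where "par = (\<lambda>v. SOME p. (p, v) \<in> Rel (grp v) \<and> dist (grp v) p < dist (grp v) v)"
  have parP: "(par v, v) \<in> Rel C \<and> dist C (par v) < dist C v"
    if "C \<in> G" "v \<in> C" "v \<noteq> rt C" for C v
  proof -
    have "(rt C, v) \<in> (Rel C)\<^sup>*" using conn that rtC unfolding msg_connected_def Rel_def by blast
    from parent_exists[OF this that(3)] obtain p where
      "(p, v) \<in> Rel C \<and> dist C p < dist C v" unfolding dist_def by blast
    then show ?thesis unfolding par_def grpC[OF that(1,2)] by (rule someI)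
  qed
  define bit where "bit = (\<lambda>v (x::nat\<Rightarrow>bool). if v \<in> \<Union>G then x v \<noteq> x (par v) else x v)"
  define \<sigma> where "\<sigma> = (\<lambda>v. if v \<in> \<Union>G then SOME s. s < S \<and> v \<in> M s \<and> par v \<in> M s
                          else SOME s. s < S \<and> v \<in> M s)"
  have notroot: "v \<noteq> rt C" if "v \<in> B" "C \<in> G" for v C
    using that unfolding B_def Roots_def by blast
  have snd: "\<forall>v\<in>B. \<sigma> v < S \<and> (\<forall>x y. (\<forall>j\<in>M (\<sigma> v). x j = y j) \<longrightarrow> bit v x = bit v y)"
  proof
    fix v assume vB: "v \<in> B"
    show "\<sigma> v < S \<and> (\<forall>x y. (\<forall>j\<in>M (\<sigma> v). x j = y j) \<longrightarrow> bit v x = bit v y)"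
    proof (cases "v \<in> \<Union>G")
      case True
      then obtain C where C: "C \<in> G" "v \<in> C" by blast
      have "(par v, v) \<in> Rel C" using parP[OF C notroot[OF vB C(1)]] by blast
      then have "\<exists>s. s < S \<and> v \<in> M s \<and> par v \<in> M s"
        unfolding Rel_def msg_edge_def by blast
      then have "\<sigma> v < S \<and> v \<in> M (\<sigma> v) \<and> par v \<in> M (\<sigma> v)"
        unfolding \<sigma>_def using True someI_ex[of "\<lambda>s. s < S \<and> v \<in> M s \<and> par v \<in> M s"] by simp
      then show ?thesis unfolding bit_def using True by auto
    next
      case False
      have "v < n" using vB unfolding B_def NL_def by auto
      then have "\<exists>s. s < S \<and> v \<in> M s" using valid unfolding valid_instance_def by blast
      then have "\<sigma> v < S \<and> v \<in> M (\<sigma> v)"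
        unfolding \<sigma>_def using False someI_ex[of "\<lambda>s. s < S \<and> v \<in> M s"] by simp
      then show ?thesis unfolding bit_def using False by auto
    qed
  qed
  have dec: "\<forall>i<n. \<forall>j\<in>R i. \<forall>x y. x i = y i \<and> (\<forall>v\<in>B. bit v x = bit v y) \<longrightarrow> x j = y j"
  proof (intro allI impI ballI, elim conjE)
    fix i j and x y :: "nat \<Rightarrow> bool"
    assume i: "i < n" and j: "j \<in> R i" and xy: "x i = y i" and bits: "\<forall>v\<in>B. bit v x = bit v y"
    have arc: "(j, i) \<in> arcs n R" using i j unfolding arcs_def by auto
    have jn: "j < n" using valid i j unfolding valid_instance_def by blast
    have jNL: "j \<in> NL" using arc jn unfolding NL_def non_leaf_def by blast
    show "x j = y j"
    proof (cases "j \<in> \<Union>G")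
      case True
      then obtain C where C: "C \<in> G" "j \<in> C" by blast
      have iC: "i \<in> C" using cl C arc by blast
      have claim: "(x v = y v) = (x (rt C) = y (rt C))" if "v \<in> C" for v
        using that
      proof (induction "dist C v" arbitrary: v rule: less_induct)
        case less
        show ?case
        proof (cases "v = rt C")
          case True then show ?thesis by simp
        next
          case False
          have pp: "(par v, v) \<in> Rel C \<and> dist C (par v) < dist C v"
            using parP[OF C(1) less.prems False] .
          then have pC: "par v \<in> C" unfolding Rel_def by blast
          have IH: "(x (par v) = y (par v)) = (x (rt C) = y (rt C))"
            using pp by (intro less.hyps[OF _ pC]) simp
          have vNR: "v \<notin> Roots"
          proof
            assume "v \<in> Roots"
            then obtain C' where C': "C' \<in> G" "v = rt C'" unfolding Roots_def by blast
            then have "v \<in> C'" using rtC by simp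
            then have "C' = C" using disj C'(1) C(1) less.prems by blast
            then show False using C' False by simp
          qed
          have "v \<in> NL" using less.prems sub C(1) unfolding NL_def by blast
          then have vB: "v \<in> B" using vNR unfolding B_def by blast
          have "bit v x = bit v y" using bits vB by blast
          then have "(x v \<noteq> x (par v)) = (y v \<noteq> y (par v))"
          proof -
            have "v \<in> \<Union>G" using less.prems C(1) by blast
            then show ?thesis using \<open>bit v x = bit v y\<close> unfolding bit_def by simp
          qed
          then show ?thesis using IH by blast
        qed
      qed
      show ?thesis using claim[OF C(2)] claim[OF iC] xy by blast
    next
      case False
      have "j \<notin> Roots" using False rtC unfolding Roots_def by blast
      then have "j \<in> B" using jNL unfolding B_def by blast
      then show ?thesis using bits False unfolding bit_def by auto
    qed
  qed
  have "min_index_code_length n R S M \<le> card B" by (rule code_bound[OF dec snd finB])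
  then show ?thesis using cardB cardle unfolding V_out_def NL_def[symmetric] by simp
qed


lemma scc_same:
  assumes "x \<in> scc_of n R v"
  shows "scc_of n R x = scc_of n R v"
  using assms unfolding scc_of_def by (auto intro: rtrancl_trans)

lemma leaf_scc_nonleaf:
  assumes "is_leaf_scc n R C" "u \<in> C"
  shows "u < n \<and> non_leaf n R u"
proof -
  obtain v where v: "v < n" "C = scc_of n R v" using assms unfolding is_leaf_scc_def is_scc_def by blast
  have "card C \<ge> 2" using assms unfolding is_leaf_scc_def by blast
  moreover have "\<not> C \<subseteq> {u} \<or> card C \<le> 1"
    using card_mono[of "{u}" C] by auto
  ultimately obtain w where w: "w \<in> C" "w \<noteq> u" by auto
  have "(u, v) \<in> (arcs n R)\<^sup>*" "(v, w) \<in> (arcs n R)\<^sup>*" "u < n"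
    using assms(2) w(1) v(2) unfolding scc_of_def by auto
  then have "(u, w) \<in> (arcs n R)\<^sup>*" "u < n" by auto
  then show ?thesis using w(2) unfolding non_leaf_def
    by (metis converse_rtranclE)
qed

lemma ct_D:
  assumes "is_connecting_tree n R S M VT ET"
  shows "VT \<subseteq> {..<n}" "is_tree VT ET" "\<forall>a b. {a, b} \<in> ET \<longrightarrow> msg_edge S M a b"
    "\<forall>v\<in>VT. non_leaf n R v \<and> (\<forall>w. (v, w) \<in> arcs n R \<longrightarrow> w \<in> VT)"
    "\<forall>v\<in>VT. \<not> (\<exists>C. is_leaf_scc n R C \<and> msg_connected S M C \<and> v \<in> C)"
  using assms unfolding is_connecting_tree_def by (blast+)
lemma tree_D:
  assumes "is_tree V E"
  shows "finite V" "V \<noteq> {}" "\<forall>e\<in>E. \<exists>a b. a \<noteq> b \<and> a \<in> V \<and> b \<in> V \<and> e = {a, b}"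
    "\<forall>u\<in>V. \<forall>w\<in>V. (u, w) \<in> (edge_rel E)\<^sup>*"
  using assms unfolding is_tree_def by (blast+)
theorem theorem6:
  fixes n S k :: nat and R M :: "nat \<Rightarrow> nat set"
    and VT :: "nat \<Rightarrow> nat set" and ET :: "nat \<Rightarrow> nat set set"
  assumes "valid_instance n R S M"
    and "\<forall>t<k. is_connecting_tree n R S M (VT t) (ET t)"
    and "\<forall>t<k. \<forall>t'<k. t \<noteq> t' \<longrightarrow> VT t \<inter> VT t' = {}"
  shows "int (min_index_code_length n R S M)
           \<le> int (V_out n R) - (int (N_conn n R S M) + int k)"
proof -
  define SC where "SC = {C. is_leaf_scc n R C \<and> msg_connected S M C}"
  define TR where "TR = VT ` {..<k}"
  define G where "G = SC \<union> TR"
  have ct: "is_connecting_tree n R S M (VT t) (ET t)" if "t < k" for t using assms(2) that by blast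
  note ctD = ct_D[OF ct]
  have VTne: "VT t \<noteq> {}" if "t < k" for t using tree_D(2)[OF ctD(2)[OF that]] .
  have VTsub: "VT t \<subseteq> {v. v < n \<and> non_leaf n R v}" if "t < k" for t
    using ctD(1,4)[OF that] by blast
  have VTcl: "\<forall>u\<in>VT t. \<forall>w. (u, w) \<in> arcs n R \<longrightarrow> w \<in> VT t" if "t < k" for t
    using ctD(4)[OF that] by blast
  have VTnsc: "VT t \<inter> C = {}" if "t < k" "C \<in> SC" for t C
    using ctD(5)[OF that(1)] that(2) unfolding SC_def by blast
  have SCsub: "C \<subseteq> {v. v < n \<and> non_leaf n R v}" if "C \<in> SC" for C
    using that leaf_scc_nonleaf unfolding SC_def by blast
  have SCcl: "\<forall>u\<in>C. \<forall>w. (u, w) \<in> arcs n R \<longrightarrow> w \<in> C" if "C \<in> SC" for C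
    using that unfolding SC_def is_leaf_scc_def by blast
  have SCne: "C \<noteq> {}" if "C \<in> SC" for C
  proof
    assume "C = {}"
    moreover have "card C \<ge> 2" using that unfolding SC_def is_leaf_scc_def by blast
    ultimately show False by simp
  qed
  have finSC: "finite SC"
    by (rule finite_subset[of _ "Pow {..<n}"]) (use SCsub in auto)
  have finG: "finite G" unfolding G_def TR_def using finSC by simp
  have injVT: "inj_on VT {..<k}"
  proof (rule inj_onI)
    fix t t' assume "t \<in> {..<k}" "t' \<in> {..<k}" "VT t = VT t'"
    then show "t = t'" using assms(3) VTne by (metis Int_absorb lessThan_iff)
  qed
  have cardTR: "card TR = k" unfolding TR_def using injVT by (simp add: card_image)
  have SCTR: "SC \<inter> TR = {}"
  proof -
    have "VT t \<notin> SC" if tk: "t < k" for t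
      using VTnsc[OF tk] VTne[OF tk] by blast
    then show ?thesis unfolding TR_def by blast
  qed
  have cardG: "card G = N_conn n R S M + k"
  proof -
    have "card G = card SC + card TR" unfolding G_def
      by (rule card_Un_disjoint[OF finSC _ SCTR]) (simp add: TR_def)
    then show ?thesis using cardTR unfolding N_conn_def SC_def by simp
  qed
  have TRconn: "msg_connected S M (VT t)" if tk: "t < k" for t
  proof -
    define C where "C = VT t"
    have sub: "edge_rel (ET t) \<subseteq> {(a, b). a \<in> C \<and> b \<in> C \<and> msg_edge S M a b}"
    proof
      fix p assume p: "p \<in> edge_rel (ET t)"
      obtain a b where ab: "p = (a, b)" by (cases p)
      have e: "{a, b} \<in> ET t" using p ab unfolding edge_rel_def by simp
      obtain a' b' where "a' \<noteq> b'" "a' \<in> C" "b' \<in> C" "{a, b} = {a', b'}"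
        using bspec[OF tree_D(3)[OF ctD(2)[OF tk]] e] unfolding C_def by blast
      then have "a \<in> C" "b \<in> C" by (auto simp: doubleton_eq_iff)
      moreover have "msg_edge S M a b" using ctD(3)[OF tk] e by blast
      ultimately show "p \<in> {(a, b). a \<in> C \<and> b \<in> C \<and> msg_edge S M a b}" using ab by simp
    qed
    have cn: "\<forall>u\<in>C. \<forall>w\<in>C. (u, w) \<in> (edge_rel (ET t))\<^sup>*"
      using tree_D(4)[OF ctD(2)[OF that]] unfolding C_def .
    show ?thesis unfolding msg_connected_def C_def[symmetric]
      using cn rtrancl_mono[OF sub] by blast
  qed
  have "min_index_code_length n R S M + card G \<le> V_out n R"
  proof (rule groups_bound[OF assms(1) finG])
    show "\<forall>C\<in>G. C \<noteq> {}"
      unfolding G_def TR_def using VTne SCne by blast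
    show "\<forall>C\<in>G. C \<subseteq> {v. v < n \<and> non_leaf n R v}"
      unfolding G_def TR_def using VTsub SCsub by blast
    show "\<forall>C\<in>G. \<forall>u\<in>C. \<forall>w. (u, w) \<in> arcs n R \<longrightarrow> w \<in> C"
      unfolding G_def TR_def using VTcl SCcl by blast
    show "\<forall>C\<in>G. msg_connected S M C"
      unfolding G_def TR_def using TRconn unfolding SC_def by blast
    show "\<forall>C\<in>G. \<forall>C'\<in>G. C \<noteq> C' \<longrightarrow> C \<inter> C' = {}"
    proof (intro ballI impI)
      fix C C' assume C: "C \<in> G" and C': "C' \<in> G" and ne: "C \<noteq> C'"
      have sc: "C \<inter> C' = {}" if h: "C \<in> SC" "C' \<in> SC" "C \<noteq> C'" for C C'
      proof (rule ccontr)
        assume "C \<inter> C' \<noteq> {}"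
        then obtain x where x: "x \<in> C" "x \<in> C'" by blast
        obtain v where v: "C = scc_of n R v" using h(1) unfolding SC_def is_leaf_scc_def is_scc_def by blast
        obtain v' where v': "C' = scc_of n R v'" using h(2) unfolding SC_def is_leaf_scc_def is_scc_def by blast
        have "scc_of n R x = C" using scc_same[of x n R v] x(1) v by simp
        moreover have "scc_of n R x = C'" using scc_same[of x n R v'] x(2) v' by simp
        ultimately show False using h(3) by simp
      qed
      consider "C \<in> SC" | t where "t < k" "C = VT t" using C unfolding G_def TR_def by blast
      then show "C \<inter> C' = {}"
      proof cases
        case 1
        consider "C' \<in> SC" | t where "t < k" "C' = VT t" using C' unfolding G_def TR_def by blast
        then show ?thesis
        proof cases
          case 1
          then show ?thesis using sc \<open>C \<in> SC\<close> ne by blast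
        next
          case 2
          then show ?thesis using VTnsc[OF 2(1) \<open>C \<in> SC\<close>] by blast
        qed
      next
        case (2 t)
        consider "C' \<in> SC" | t' where "t' < k" "C' = VT t'" using C' unfolding G_def TR_def by blast
        then show ?thesis
        proof cases
          case 1
          then show ?thesis using VTnsc[OF 2(1) 1] 2(2) by blast
        next
          case (2 t')
          then show ?thesis using assms(3) \<open>t < k\<close> \<open>C = VT t\<close> ne by blast
        qed
      qed
    qed
  qed
  then show ?thesis using cardG by simp
qed

end
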